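(* Let $R$ be a commutative unital ring, $A$ a unital associative $R$-algebra and $M$ an $(A,A)$-bimodule. Then there are isomorphisms of cochain complexes of $R$-modules \[(C^*_\mu({\tt I}_n;A,M),d)\cong(\widehat C^*_{\rm Chrom}({\tt I}_n;A,M),\widehat{\tt d})\cong(C^*_{\rm Chrom}({\tt I}_n;A,M),{\tt d})\] and \[(C^*_\mu({\tt P}_n;A,M),d)\oplus(M[n+1],0)\cong(\widehat C^*_{\rm Chrom}({\tt P}_n;A,M),\widehat{\tt d}),\] where $(M[n+1],0)$ is the complex consisting of a single copy of $M$ in degree $n+1$.
   Context: ${\tt I}_n$ is the digraph with vertices $v_0,\dots,v_n$ and edges $(v_{i-1},v_i)$, $1\le i\le n$; ${\tt P}_n$ has vertices $v_0,\dots,v_n$ and edges $(v_i,v_{i+1})$, $0\le i<n$, and $(v_n,v_0)$. For ${\tt G}\in\{{\tt I}_n,{\tt P}_n\}$ and a spanning subgraph ${\tt H}$ (all vertices, subset of edges) with connected components $c_0<\dots<c_k$ ordered by minimal vertex (so $v_0\in c_0$), set $\mathcal F({\tt H})=M\otimes_R A^{\otimes_R k}$. For ${\tt H}\prec{\tt H}'={\tt H}\cup e$ (adding one edge): if $e$ joins distinct components $c_s\ni s(e)$ and $c_t\ni t(e)$, the map replaces the factors $a_s,a_t$ by $a_s\cdot a_t$ at position $\min(s,t)$ (the position of the merged component), other factors unchanged; if both endpoints of $e$ lie in one component (only possible when ${\tt H}'={\tt P}_n$), the map ${\tt d}_{{\tt H}\prec{\tt H}'}$ is the identity $M\to M$ while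 $\widehat{\tt d}_{{\tt H}\prec{\tt H}'}$ is zero. With a fixed edge order and $\zeta({\tt H},{\tt H}\cup e)$ = number of edges of ${\tt H}$ preceding $e$ mod 2: $C^i_{\rm Chrom}=\widehat C^i_{\rm Chrom}=\bigoplus_{\#E({\tt H})=i}\mathcal F({\tt H})$ over all spanning subgraphs, with differentials ${\tt d}=\sum(-1)^\zeta{\tt d}_{{\tt H}\prec{\tt H}'}$ and $\widehat{\tt d}=\sum(-1)^\zeta\widehat{\tt d}_{{\tt H}\prec{\tt H}'}$ (chromatic complexes of Helme-Guizon–Rong and Przytycki, in their orientation-dependent form). The multipath complex $C^i_\mu({\tt G};A,M)$ is the sum of $\mathcal F({\tt H})$ over multipaths ${\tt H}$ (spanning subgraphs whose components are isolated vertices or simple directed paths; for ${\tt I}_n$ all spanning subgraphs, for ${\tt P}_n$ all except ${\tt P}_n$) with $i$ edges and the same covering maps and signs (any sign assignment gives an isomorphic complex). *)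

theory Defs
  imports Main "HOL-Library.Poly_Mapping"
begin

text \<open>R is a type of class comm_ring_1. A unital associative R-algebra is a ring_1 type 'a
together with a ring homomorphism alg from R into the centre of A (scalar action r.a = alg r * a).\<close>

definition r_algebra :: "('r::comm_ring_1 \<Rightarrow> 'a::ring_1) \<Rightarrow> bool" where
  "r_algebra alg \<longleftrightarrow> alg 1 = 1 \<and> (\<forall>r s. alg (r + s) = alg r + alg s) \<and>
     (\<forall>r s. alg (r * s) = alg r * alg s) \<and> (\<forall>r a. alg r * a = a * alg r)"

definition bimodule :: "('r::comm_ring_1 \<Rightarrow> 'a::ring_1) \<Rightarrow> ('a \<Rightarrow> 'm::ab_group_add \<Rightarrow> 'm)
     \<Rightarrow> ('m \<Rightarrow> 'a \<Rightarrow> 'm) \<Rightarrow> bool" where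
  "bimodule alg lm rm \<longleftrightarrow>
     (\<forall>m. lm 1 m = m) \<and> (\<forall>a b m. lm (a * b) m = lm a (lm b m)) \<and>
     (\<forall>a b m. lm (a + b) m = lm a m + lm b m) \<and> (\<forall>a m m'. lm a (m + m') = lm a m + lm a m') \<and>
     (\<forall>m. rm m 1 = m) \<and> (\<forall>a b m. rm m (a * b) = rm (rm m a) b) \<and>
     (\<forall>a b m. rm m (a + b) = rm m a + rm m b) \<and> (\<forall>a m m'. rm (m + m') a = rm m a + rm m' a) \<and>
     (\<forall>a b m. rm (lm a m) b = lm a (rm m b)) \<and>
     (\<forall>r m. lm (alg r) m = rm m (alg r))"

text \<open>Free R-module on the pairs (m, [a_1,...,a_k]); the tensor product
M \<otimes>_R A^{\<otimes>k} is the quotient of the span of the generators with list length k by the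
submodule spanned by the multilinearity relations. We take one relation submodule for all
lengths at once (it is graded by length), so the quotient over all lengths is the direct sum
over k of the tensor products, and M \<otimes> A^{\<otimes>k} is the image of the length-k part.\<close>

type_synonym ('m, 'a, 'r) free = "('m \<times> 'a list) \<Rightarrow>\<^sub>0 'r"

definition fsmult :: "'r::comm_ring_1 \<Rightarrow> ('m, 'a, 'r) free \<Rightarrow> ('m, 'a, 'r) free" where
  "fsmult r f = Poly_Mapping.map (\<lambda>c. r * c) f"

definition gen :: "'m \<Rightarrow> 'a list \<Rightarrow> ('m, 'a, 'r::comm_ring_1) free" where
  "gen m as = Poly_Mapping.single (m, as) 1"

definition tensor_relations ::
  "('r::comm_ring_1 \<Rightarrow> 'a::ring_1) \<Rightarrow> ('a \<Rightarrow> 'm::ab_group_add \<Rightarrow> 'm) \<Rightarrow> ('m, 'a, 'r) free set" where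
  "tensor_relations alg lm =
     {gen (m1 + m2) as - gen m1 as - gen m2 as | m1 m2 as. True} \<union>
     {gen m (as[i := a + b]) - gen m (as[i := a]) - gen m (as[i := b]) | m as i a b. i < length as} \<union>
     {gen (lm (alg r) m) as - fsmult r (gen m as) | r m as. True} \<union>
     {gen m (as[i := alg r * as ! i]) - fsmult r (gen m as) | r m as i. i < length as}"

inductive_set rspan :: "('m, 'a, 'r::comm_ring_1) free set \<Rightarrow> ('m, 'a, 'r) free set"
  for G where
    rspan_zero: "0 \<in> rspan G"
  | rspan_gen: "g \<in> G \<Longrightarrow> g \<in> rspan G"
  | rspan_add: "x \<in> rspan G \<Longrightarrow> y \<in> rspan G \<Longrightarrow> x + y \<in> rspan G"
  | rspan_smult: "x \<in> rspan G \<Longrightarrow> fsmult r x \<in> rspan G"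

definition tensor_N :: "('r::comm_ring_1 \<Rightarrow> 'a::ring_1) \<Rightarrow> ('a \<Rightarrow> 'm::ab_group_add \<Rightarrow> 'm)
    \<Rightarrow> ('m, 'a, 'r) free set" where
  "tensor_N alg lm = rspan (tensor_relations alg lm)"

definition tq :: "('r::comm_ring_1 \<Rightarrow> 'a::ring_1) \<Rightarrow> ('a \<Rightarrow> 'm::ab_group_add \<Rightarrow> 'm)
    \<Rightarrow> ('m, 'a, 'r) free \<Rightarrow> ('m, 'a, 'r) free set" where
  "tq alg lm f = (\<lambda>n. f + n) ` tensor_N alg lm"

definition free_len :: "nat \<Rightarrow> ('m, 'a, 'r::comm_ring_1) free set" where
  "free_len k = {f. \<forall>y \<in> Poly_Mapping.keys f. length (snd y) = k}"

definition tensor_carrier :: "('r::comm_ring_1 \<Rightarrow> 'a::ring_1) \<Rightarrow> ('a \<Rightarrow> 'm::ab_group_add \<Rightarrow> 'm)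
    \<Rightarrow> nat \<Rightarrow> ('m, 'a, 'r) free set set" where
  "tensor_carrier alg lm k = tq alg lm ` free_len k"

definition rep :: "'x set \<Rightarrow> 'x" where
  "rep X = (SOME x. x \<in> X)"

definition lin_ext :: "('m \<times> 'a list \<Rightarrow> 'n \<times> 'b list) \<Rightarrow> ('m, 'a, 'r::comm_ring_1) free
    \<Rightarrow> ('n, 'b, 'r) free" where
  "lin_ext g f = (\<Sum>y \<in> Poly_Mapping.keys f. Poly_Mapping.single (g y) (Poly_Mapping.lookup f y))"

definition remove_nth :: "nat \<Rightarrow> 'a list \<Rightarrow> 'a list" where
  "remove_nth j xs = take j xs @ drop (Suc j) xs"

text \<open>Merging the factors at positions s (component of the source) and t (component of the
target) with s \<noteq> t; position 0 is the M-factor, position i \<ge> 1 is the list entry i-1.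
The result a_s * a_t is placed at position min s t.\<close>
definition merge :: "('a::ring_1 \<Rightarrow> 'm \<Rightarrow> 'm) \<Rightarrow> ('m \<Rightarrow> 'a \<Rightarrow> 'm) \<Rightarrow> nat \<Rightarrow> nat
    \<Rightarrow> 'm \<times> 'a list \<Rightarrow> 'm \<times> 'a list" where
  "merge lm rm s t x = (case x of (m, as) \<Rightarrow>
     if s = 0 then (rm m (as ! (t - 1)), remove_nth (t - 1) as)
     else if t = 0 then (lm (as ! (s - 1)) m, remove_nth (s - 1) as)
     else (m, remove_nth (max s t - 1) (as[min s t - 1 := as ! (s - 1) * as ! (t - 1)])))"

text \<open>A digraph on vertices 0..nv with edges indexed 0..<ne (this indexing is the fixed edge
order), edge j going from src j to tgt j. A spanning subgraph is a set of edge indices.\<close>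

definition conn :: "(nat \<Rightarrow> nat) \<Rightarrow> (nat \<Rightarrow> nat) \<Rightarrow> nat set \<Rightarrow> nat \<Rightarrow> nat \<Rightarrow> bool" where
  "conn src tgt H u v \<longleftrightarrow> (u, v) \<in> (\<Union>j\<in>H. {(src j, tgt j), (tgt j, src j)})\<^sup>*"

definition comp :: "nat \<Rightarrow> (nat \<Rightarrow> nat) \<Rightarrow> (nat \<Rightarrow> nat) \<Rightarrow> nat set \<Rightarrow> nat \<Rightarrow> nat set" where
  "comp nv src tgt H v = {u \<in> {0..nv}. conn src tgt H u v}"

definition cmin :: "nat \<Rightarrow> (nat \<Rightarrow> nat) \<Rightarrow> (nat \<Rightarrow> nat) \<Rightarrow> nat set \<Rightarrow> nat \<Rightarrow> nat" where
  "cmin nv src tgt H v = Min (comp nv src tgt H v)"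

text \<open>index of the component containing v, components ordered by minimal vertex\<close>
definition crank :: "nat \<Rightarrow> (nat \<Rightarrow> nat) \<Rightarrow> (nat \<Rightarrow> nat) \<Rightarrow> nat set \<Rightarrow> nat \<Rightarrow> nat" where
  "crank nv src tgt H v =
     card {w \<in> {0..nv}. cmin nv src tgt H w = w \<and> w < cmin nv src tgt H v}"

text \<open>k(H) = number of components minus one\<close>
definition kH :: "nat \<Rightarrow> (nat \<Rightarrow> nat) \<Rightarrow> (nat \<Rightarrow> nat) \<Rightarrow> nat set \<Rightarrow> nat" where
  "kH nv src tgt H = card {w \<in> {0..nv}. cmin nv src tgt H w = w} - 1"

text \<open>Multipath: every connected component is a simple directed path v_0 \<rightarrow> ... \<rightarrow> v_l
(l = 0: an isolated vertex).\<close>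
definition is_multipath :: "nat \<Rightarrow> (nat \<Rightarrow> nat) \<Rightarrow> (nat \<Rightarrow> nat) \<Rightarrow> nat set \<Rightarrow> bool" where
  "is_multipath nv src tgt H \<longleftrightarrow>
     (\<forall>v \<in> {0..nv}. \<exists>vs. distinct vs \<and> set vs = comp nv src tgt H v \<and>
        (\<forall>i. Suc i < length vs \<longrightarrow> (\<exists>j\<in>H. src j = vs ! i \<and> tgt j = vs ! Suc i)) \<and>
        (\<forall>j\<in>H. src j \<in> comp nv src tgt H v \<longrightarrow>
            (\<exists>i. Suc i < length vs \<and> src j = vs ! i \<and> tgt j = vs ! Suc i)) \<and>
        (\<forall>j1\<in>H. \<forall>j2\<in>H. src j1 = src j2 \<and> tgt j1 = tgt j2 \<longrightarrow> j1 = j2))"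

definition I_src :: "nat \<Rightarrow> nat" where "I_src j = j"
definition I_tgt :: "nat \<Rightarrow> nat" where "I_tgt j = Suc j"
definition P_src :: "nat \<Rightarrow> nat \<Rightarrow> nat" where "P_src n j = j"
definition P_tgt :: "nat \<Rightarrow> nat \<Rightarrow> nat" where "P_tgt n j = Suc j mod Suc n"

record ('r, 'x) cochain_cx =
  cx_carrier :: "nat \<Rightarrow> 'x set"
  cx_add :: "nat \<Rightarrow> 'x \<Rightarrow> 'x \<Rightarrow> 'x"
  cx_smult :: "nat \<Rightarrow> 'r \<Rightarrow> 'x \<Rightarrow> 'x"
  cx_d :: "nat \<Rightarrow> 'x \<Rightarrow> 'x"

definition cx_iso :: "('r, 'x) cochain_cx \<Rightarrow> ('r, 'y) cochain_cx \<Rightarrow> bool" where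
  "cx_iso C D \<longleftrightarrow> (\<exists>f :: nat \<Rightarrow> 'x \<Rightarrow> 'y. \<forall>i.
     bij_betw (f i) (cx_carrier C i) (cx_carrier D i) \<and>
     (\<forall>x\<in>cx_carrier C i. \<forall>y\<in>cx_carrier C i.
         f i (cx_add C i x y) = cx_add D i (f i x) (f i y)) \<and>
     (\<forall>r. \<forall>x\<in>cx_carrier C i. f i (cx_smult C i r x) = cx_smult D i r (f i x)) \<and>
     (\<forall>x\<in>cx_carrier C i. f (Suc i) (cx_d C i x) = cx_d D i (f i x)))"

definition cx_dsum :: "('r, 'x) cochain_cx \<Rightarrow> ('r, 'y) cochain_cx \<Rightarrow> ('r, 'x \<times> 'y) cochain_cx" where
  "cx_dsum C D = \<lparr>cx_carrier = (\<lambda>i. cx_carrier C i \<times> cx_carrier D i),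
     cx_add = (\<lambda>i x y. (cx_add C i (fst x) (fst y), cx_add D i (snd x) (snd y))),
     cx_smult = (\<lambda>i r x. (cx_smult C i r (fst x), cx_smult D i r (snd x))),
     cx_d = (\<lambda>i x. (cx_d C i (fst x), cx_d D i (snd x)))\<rparr>"

definition shifted_M :: "('r::comm_ring_1 \<Rightarrow> 'a::ring_1) \<Rightarrow> ('a \<Rightarrow> 'm::ab_group_add \<Rightarrow> 'm)
    \<Rightarrow> nat \<Rightarrow> ('r, 'm) cochain_cx" where
  "shifted_M alg lm d = \<lparr>cx_carrier = (\<lambda>i. if i = d then UNIV else {0}),
     cx_add = (\<lambda>i x y. x + y), cx_smult = (\<lambda>i r x. lm (alg r) x), cx_d = (\<lambda>i x. 0)\<rparr>"

definition subgraphs :: "nat \<Rightarrow> (nat set \<Rightarrow> bool) \<Rightarrow> nat \<Rightarrow> nat set set" where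
  "subgraphs ne P i = {H. H \<subseteq> {0..<ne} \<and> card H = i \<and> P H}"

text \<open>summand of d from F(H) to F(H \<union> {e}), applied to a representative; hat selects whether
the map is zero (hat) or the identity (not hat) when e joins a component to itself\<close>
definition cover_map :: "('a::ring_1 \<Rightarrow> 'm \<Rightarrow> 'm) \<Rightarrow> ('m \<Rightarrow> 'a \<Rightarrow> 'm) \<Rightarrow> bool \<Rightarrow> nat
    \<Rightarrow> (nat \<Rightarrow> nat) \<Rightarrow> (nat \<Rightarrow> nat) \<Rightarrow> nat set \<Rightarrow> nat \<Rightarrow> ('m, 'a, 'r::comm_ring_1) free
    \<Rightarrow> ('m, 'a, 'r) free" where
  "cover_map lm rm hat nv src tgt H e f =
     (let s = crank nv src tgt H (src e); t = crank nv src tgt H (tgt e) in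
      if s \<noteq> t then lin_ext (merge lm rm s t) f else if hat then 0 else f)"

text \<open>The complex \<Oplus>_{H with i edges, P H} F(H); an element is a function from subgraphs to
elements of the tensor products (and {} outside the index set).\<close>
definition graph_cx :: "('r::comm_ring_1 \<Rightarrow> 'a::ring_1) \<Rightarrow> ('a \<Rightarrow> 'm::ab_group_add \<Rightarrow> 'm)
    \<Rightarrow> ('m \<Rightarrow> 'a \<Rightarrow> 'm) \<Rightarrow> bool \<Rightarrow> nat \<Rightarrow> nat \<Rightarrow> (nat \<Rightarrow> nat) \<Rightarrow> (nat \<Rightarrow> nat)
    \<Rightarrow> (nat set \<Rightarrow> bool) \<Rightarrow> ('r, nat set \<Rightarrow> ('m, 'a, 'r) free set) cochain_cx" where
  "graph_cx alg lm rm hat nv ne src tgt P = \<lparr>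
     cx_carrier = (\<lambda>i. {x. \<forall>H. (H \<in> subgraphs ne P i \<longrightarrow>
                                   x H \<in> tensor_carrier alg lm (kH nv src tgt H)) \<and>
                               (H \<notin> subgraphs ne P i \<longrightarrow> x H = {})}),
     cx_add = (\<lambda>i x y H. if H \<in> subgraphs ne P i then tq alg lm (rep (x H) + rep (y H)) else {}),
     cx_smult = (\<lambda>i r x H. if H \<in> subgraphs ne P i then tq alg lm (fsmult r (rep (x H))) else {}),
     cx_d = (\<lambda>i x H'. if H' \<in> subgraphs ne P (Suc i) then
        tq alg lm (\<Sum>e\<in>H'. fsmult ((- 1) ^ card {j \<in> H' - {e}. j < e})
            (cover_map lm rm hat nv src tgt (H' - {e}) e (rep (x (H' - {e})))))
        else {})\<rparr>"

definition chrom_cx where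
  "chrom_cx alg lm rm nv ne src tgt = graph_cx alg lm rm False nv ne src tgt (\<lambda>H. True)"

definition chrom_hat_cx where
  "chrom_hat_cx alg lm rm nv ne src tgt = graph_cx alg lm rm True nv ne src tgt (\<lambda>H. True)"

definition multipath_cx where
  "multipath_cx alg lm rm nv ne src tgt =
     graph_cx alg lm rm True nv ne src tgt (is_multipath nv src tgt)"

end

theory Submission
  imports Defs
begin


lemma lookup_fsmult: "Poly_Mapping.lookup (fsmult r f) k = r * Poly_Mapping.lookup f k"
  by (simp add: fsmult_def map.rep_eq when_def)

lemma fsmult_add: "fsmult r (x + y) = fsmult r x + fsmult r y"
  by (rule poly_mapping_eqI) (simp add: lookup_fsmult lookup_add algebra_simps)

lemma fsmult_diff: "fsmult r (x - y) = fsmult r x - fsmult r y"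
  by (rule poly_mapping_eqI) (simp add: lookup_fsmult lookup_minus algebra_simps)

lemma fsmult_zero[simp]: "fsmult r 0 = 0"
  by (rule poly_mapping_eqI) (simp add: lookup_fsmult)

lemma fsmult_m1: "fsmult (-1) x = - x"
  by (rule poly_mapping_eqI) (simp add: lookup_fsmult)

lemma fsmult_single: "fsmult c (Poly_Mapping.single k 1) = Poly_Mapping.single k c"
  by (rule poly_mapping_eqI) (simp add: lookup_fsmult lookup_single when_def)

lemma keys_fsmult: "Poly_Mapping.keys (fsmult r x) \<subseteq> Poly_Mapping.keys x"
  by (auto simp: in_keys_iff lookup_fsmult)

lemma N_zero: "0 \<in> tensor_N alg lm"
  unfolding tensor_N_def by (rule rspan_zero)
lemma N_add: "x \<in> tensor_N alg lm \<Longrightarrow> y \<in> tensor_N alg lm \<Longrightarrow> x + y \<in> tensor_N alg lm"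
  unfolding tensor_N_def by (rule rspan_add)
lemma N_smult: "x \<in> tensor_N alg lm \<Longrightarrow> fsmult r x \<in> tensor_N alg lm"
  unfolding tensor_N_def by (rule rspan_smult)
lemma N_neg: "x \<in> tensor_N alg lm \<Longrightarrow> - x \<in> tensor_N alg lm"
  using N_smult[of x alg lm "-1"] by (simp add: fsmult_m1)
lemma N_diff: "x \<in> tensor_N alg lm \<Longrightarrow> y \<in> tensor_N alg lm \<Longrightarrow> x - y \<in> tensor_N alg lm"
  using N_add[OF _ N_neg] by (metis diff_conv_add_uminus)

lemma N_rel1: "gen (m1 + m2) as - gen m1 as - gen m2 as \<in> tensor_N alg lm"
  unfolding tensor_N_def tensor_relations_def by (rule rspan_gen) blast
lemma N_rel3: "gen (lm (alg r) m) as - fsmult r (gen m as) \<in> tensor_N alg lm"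
  unfolding tensor_N_def tensor_relations_def by (rule rspan_gen) blast

lemma tq_eq_iff: "tq alg lm a = tq alg lm b \<longleftrightarrow> a - b \<in> tensor_N alg lm"
proof
  assume h: "tq alg lm a = tq alg lm b"
  have "a \<in> tq alg lm a" unfolding tq_def using N_zero by force
  then have "a \<in> tq alg lm b" using h by simp
  then obtain x where "x \<in> tensor_N alg lm" "a = b + x" unfolding tq_def by auto
  then show "a - b \<in> tensor_N alg lm" by simp
next
  assume h: "a - b \<in> tensor_N alg lm"
  have "b - a \<in> tensor_N alg lm" using N_neg[OF h] by simp
  show "tq alg lm a = tq alg lm b"
    unfolding tq_def
  proof (intro set_eqI iffI)
    fix z assume "z \<in> (+) a ` tensor_N alg lm"
    then obtain x where x: "x \<in> tensor_N alg lm" "z = a + x" by auto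
    then have "z = b + ((a - b) + x)" by simp
    moreover have "(a - b) + x \<in> tensor_N alg lm" using N_add[OF h x(1)] .
    ultimately show "z \<in> (+) b ` tensor_N alg lm" by blast
  next
    fix z assume "z \<in> (+) b ` tensor_N alg lm"
    then obtain x where x: "x \<in> tensor_N alg lm" "z = b + x" by auto
    then have "z = a + ((b - a) + x)" by simp
    moreover have "(b - a) + x \<in> tensor_N alg lm" using N_add[OF \<open>b - a \<in> _\<close> x(1)] .
    ultimately show "z \<in> (+) a ` tensor_N alg lm" by blast
  qed
qed

lemma rep_tq: "rep (tq alg lm a) - a \<in> tensor_N alg lm"
proof -
  have "a \<in> tq alg lm a" unfolding tq_def using N_zero by force
  then have "rep (tq alg lm a) \<in> tq alg lm a" unfolding rep_def by (rule someI)
  then obtain x where "x \<in> tensor_N alg lm" "rep (tq alg lm a) = a + x" unfolding tq_def by auto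
  then show ?thesis by simp
qed

lemma tq_rep_add: "tq alg lm (rep (tq alg lm a) + rep (tq alg lm b)) = tq alg lm (a + b)"
proof -
  have "(rep (tq alg lm a) + rep (tq alg lm b)) - (a + b)
      = (rep (tq alg lm a) - a) + (rep (tq alg lm b) - b)" by simp
  then show ?thesis unfolding tq_eq_iff using N_add[OF rep_tq rep_tq] by metis
qed

lemma tq_rep_smult: "tq alg lm (fsmult r (rep (tq alg lm a))) = tq alg lm (fsmult r a)"
  unfolding tq_eq_iff fsmult_diff[symmetric] by (rule N_smult[OF rep_tq])

lemma gen0_N: "gen 0 as \<in> tensor_N alg lm"
proof -
  have "- gen 0 as \<in> tensor_N alg lm" using N_rel1[of 0 0 as alg lm] by simp
  from N_neg[OF this] show ?thesis by simp
qed

section \<open>The projection phi\<close>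

definition gphi :: "('r::comm_ring_1 \<Rightarrow> 'a::ring_1) \<Rightarrow> ('a \<Rightarrow> 'm::ab_group_add \<Rightarrow> 'm)
   \<Rightarrow> 'm \<times> 'a list \<Rightarrow> 'r \<Rightarrow> 'm" where
  "gphi alg lm y c = (if snd y = [] then lm (alg c) (fst y) else 0)"

definition phi :: "('r::comm_ring_1 \<Rightarrow> 'a::ring_1) \<Rightarrow> ('a \<Rightarrow> 'm::ab_group_add \<Rightarrow> 'm)
   \<Rightarrow> ('m, 'a, 'r) free \<Rightarrow> 'm" where
  "phi alg lm f = (\<Sum>y\<in>Poly_Mapping.keys f. gphi alg lm y (Poly_Mapping.lookup f y))"

context
  fixes alg :: "'r::comm_ring_1 \<Rightarrow> 'a::ring_1"
    and lm :: "'a \<Rightarrow> 'm::ab_group_add \<Rightarrow> 'm" and rm :: "'m \<Rightarrow> 'a \<Rightarrow> 'm"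
  assumes ra: "r_algebra alg" and bm: "bimodule alg lm rm"
begin

lemma raE: "alg 1 = 1 \<and> (\<forall>r s. alg (r + s) = alg r + alg s) \<and>
     (\<forall>r s. alg (r * s) = alg r * alg s)"
  using ra unfolding r_algebra_def by (elim conjE) (intro conjI)
lemma bmE: "(\<forall>m. lm 1 m = m) \<and> (\<forall>a b m. lm (a * b) m = lm a (lm b m)) \<and>
     (\<forall>a b m. lm (a + b) m = lm a m + lm b m) \<and> (\<forall>a m m'. lm a (m + m') = lm a m + lm a m')"
  using bm unfolding bimodule_def by (elim conjE) (intro conjI)

lemma alg_add: "alg (r + s) = alg r + alg s" using raE by blast
lemma alg_mult: "alg (r * s) = alg r * alg s" using raE by blast
lemma alg_one: "alg 1 = 1" using raE by blast
lemma alg_zero: "alg 0 = 0" using alg_add[of 0 0] by simp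
lemma lm_one: "lm 1 m = m" using bmE by blast
lemma lm_mult: "lm (a * b) m = lm a (lm b m)" using bmE by blast
lemma lm_addl: "lm (a + b) m = lm a m + lm b m" using bmE by blast
lemma lm_addr: "lm a (m + m') = lm a m + lm a m'" using bmE by blast
lemma lm_zerol: "lm 0 m = 0" using lm_addl[of 0 0 m] by simp
lemma lm_zeror: "lm a 0 = 0" using lm_addr[of a 0 0] by simp

lemma lm_sum: "lm a (\<Sum>i\<in>S. f i) = (\<Sum>i\<in>S. lm a (f i))"
  by (induction S rule: infinite_finite_induct) (simp_all add: lm_zeror lm_addr)

lemma gphi_0: "gphi alg lm y 0 = 0"
  by (simp add: gphi_def alg_zero lm_zerol)
lemma gphi_add: "gphi alg lm y (c + d) = gphi alg lm y c + gphi alg lm y d"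
  by (simp add: gphi_def alg_add lm_addl)
lemma gphi_mult: "gphi alg lm y (r * c) = lm (alg r) (gphi alg lm y c)"
  by (simp add: gphi_def alg_mult lm_mult lm_zeror)

lemma phi_S: "finite S \<Longrightarrow> Poly_Mapping.keys f \<subseteq> S \<Longrightarrow>
   phi alg lm f = (\<Sum>y\<in>S. gphi alg lm y (Poly_Mapping.lookup f y))"
  unfolding phi_def
  by (rule sum.mono_neutral_left) (auto simp: in_keys_iff gphi_0)

lemma phi_add: "phi alg lm (x + y) = phi alg lm x + phi alg lm y"
proof -
  let ?S = "Poly_Mapping.keys x \<union> Poly_Mapping.keys y"
  have f: "finite ?S" by simp
  have "phi alg lm (x + y) = (\<Sum>k\<in>?S. gphi alg lm k (Poly_Mapping.lookup (x + y) k))"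
    by (rule phi_S[OF f keys_add])
  also have "\<dots> = (\<Sum>k\<in>?S. gphi alg lm k (Poly_Mapping.lookup x k)) + (\<Sum>k\<in>?S. gphi alg lm k (Poly_Mapping.lookup y k))"
    by (simp add: lookup_add gphi_add sum.distrib)
  also have "\<dots> = phi alg lm x + phi alg lm y"
    using phi_S[OF f, of x] phi_S[OF f, of y] by simp
  finally show ?thesis .
qed

lemma phi_diff: "phi alg lm (x - y) = phi alg lm x - phi alg lm y"
  using phi_add[of "x - y" y] by (simp add: algebra_simps)

lemma phi_smult: "phi alg lm (fsmult r x) = lm (alg r) (phi alg lm x)"
proof -
  have "phi alg lm (fsmult r x) = (\<Sum>k\<in>Poly_Mapping.keys x. gphi alg lm k (Poly_Mapping.lookup (fsmult r x) k))"
    by (rule phi_S[OF finite_keys keys_fsmult])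
  also have "\<dots> = (\<Sum>k\<in>Poly_Mapping.keys x. lm (alg r) (gphi alg lm k (Poly_Mapping.lookup x k)))"
    by (simp add: lookup_fsmult gphi_mult)
  also have "\<dots> = lm (alg r) (phi alg lm x)"
    unfolding phi_def by (rule lm_sum[symmetric])
  finally show ?thesis .
qed

lemma phi_gen: "phi alg lm (gen m as) = (if as = [] then m else 0)"
proof -
  have "phi alg lm (gen m as) = (\<Sum>y\<in>{(m, as)}. gphi alg lm y (Poly_Mapping.lookup (gen m as) y))"
    by (rule phi_S) (auto simp: gen_def)
  then show ?thesis by (simp add: gen_def gphi_def alg_one lm_one)
qed

lemma phi_N: "x \<in> tensor_N alg lm \<Longrightarrow> phi alg lm x = 0"
  unfolding tensor_N_def
proof (induction rule: rspan.induct)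
  case rspan_zero
  then show ?case by (simp add: phi_def)
next
  case (rspan_gen g)
  then show ?case unfolding tensor_relations_def
    apply (elim UnE CollectE exE conjE)
    apply (simp_all only: phi_diff phi_gen phi_smult)
    apply (simp_all add: lm_zeror)
    apply auto
    done
next
  case (rspan_add x y)
  then show ?case by (simp add: phi_add)
next
  case (rspan_smult x r)
  then show ?case by (simp add: phi_smult lm_zeror)
qed

lemma gen_inj: "tq alg lm (gen m []) = tq alg lm (gen m' []) \<Longrightarrow> m = m'"
  unfolding tq_eq_iff by (drule phi_N) (simp add: phi_diff phi_gen)

lemma gen_add: "tq alg lm (gen (m + m') []) = tq alg lm (gen m [] + gen m' [])"
  unfolding tq_eq_iff using N_rel1[of m m' "[]" alg lm] by (simp add: algebra_simps)

lemma gen_smult: "tq alg lm (gen (lm (alg r) m) []) = tq alg lm (fsmult r (gen m []))"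
  unfolding tq_eq_iff by (rule N_rel3)

lemma grp_id: "(P::'x::ab_group_add) + Q - A = - ((A - B - C) + (B - P) - (Q - C))"
  by (simp add: algebra_simps)

lemma free_len0_sum: "finite S \<Longrightarrow> (\<forall>y\<in>S. snd y = []) \<Longrightarrow>
  \<exists>m. (\<Sum>y\<in>S. Poly_Mapping.single y (c y)) - gen m [] \<in> tensor_N alg lm"
proof (induction S rule: finite_induct)
  case empty
  then show ?case using gen0_N[of "[]" alg lm] N_neg by fastforce
next
  case (insert y S)
  then obtain m where m: "(\<Sum>y\<in>S. Poly_Mapping.single y (c y)) - gen m [] \<in> tensor_N alg lm" by auto
  obtain m0 where y: "y = (m0, [])" using insert by (cases y) auto
  have a: "gen (lm (alg (c y)) m0 + m) [] - gen (lm (alg (c y)) m0) [] - gen m [] \<in> tensor_N alg lm"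
    by (rule N_rel1)
  have b: "gen (lm (alg (c y)) m0) [] - Poly_Mapping.single y (c y) \<in> tensor_N alg lm"
    using N_rel3[where alg=alg and r="c y" and m=m0 and as="[]" and lm=lm] by (simp add: gen_def fsmult_single y)
  have "(\<Sum>y\<in>insert y S. Poly_Mapping.single y (c y)) - gen (lm (alg (c y)) m0 + m) []
     = - ((gen (lm (alg (c y)) m0 + m) [] - gen (lm (alg (c y)) m0) [] - gen m [])
        + (gen (lm (alg (c y)) m0) [] - Poly_Mapping.single y (c y))
        - ((\<Sum>y\<in>S. Poly_Mapping.single y (c y)) - gen m []))"
    using insert by (simp add: grp_id)
  also have "\<dots> \<in> tensor_N alg lm"
    by (intro N_neg N_diff N_add a b m)
  finally show ?case by blast
qed

lemma poly_expansion: "f = (\<Sum>y\<in>Poly_Mapping.keys f. Poly_Mapping.single y (Poly_Mapping.lookup f y))"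
proof -
  have *: "finite I \<Longrightarrow> Poly_Mapping.lookup (\<Sum>y\<in>I. Poly_Mapping.single y (Poly_Mapping.lookup f y)) j =
            (if j \<in> I then Poly_Mapping.lookup f j else 0)" for I j
    by (induction I rule: finite_induct) (auto simp: lookup_single lookup_add when_def)
  show ?thesis by (rule poly_mapping_eqI) (simp add: * in_keys_iff)
qed

lemma free_len0_surj: "f \<in> free_len 0 \<Longrightarrow> \<exists>m. tq alg lm f = tq alg lm (gen m [])"
proof -
  assume "f \<in> free_len 0"
  then have "\<forall>y\<in>Poly_Mapping.keys f. snd y = []" by (simp add: free_len_def)
  from free_len0_sum[OF finite_keys this, of "Poly_Mapping.lookup f"]
  obtain m where "(\<Sum>y\<in>Poly_Mapping.keys f. Poly_Mapping.single y (Poly_Mapping.lookup f y)) - gen m [] \<in> tensor_N alg lm" by blast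
  then have "f - gen m [] \<in> tensor_N alg lm" by (simp only: poly_expansion[of f, symmetric])
  then show ?thesis unfolding tq_eq_iff by blast
qed

end




definition EE :: "(nat \<Rightarrow> nat) \<Rightarrow> (nat \<Rightarrow> nat) \<Rightarrow> nat set \<Rightarrow> (nat \<times> nat) set" where
  "EE src tgt H = (\<Union>j\<in>H. {(src j, tgt j), (tgt j, src j)})"

lemma conn_EE: "conn src tgt H u v \<longleftrightarrow> (u, v) \<in> (EE src tgt H)\<^sup>*"
  by (simp add: conn_def EE_def)

lemma sym_EE: "sym (EE src tgt H)"
  by (auto simp: EE_def sym_def)

lemma conn_refl: "conn src tgt H u u"
  by (simp add: conn_EE)

lemma conn_sym: "conn src tgt H u v \<Longrightarrow> conn src tgt H v u"
  using sym_rtrancl[OF sym_EE] unfolding conn_EE sym_def by blast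

lemma conn_trans: "conn src tgt H u v \<Longrightarrow> conn src tgt H v w \<Longrightarrow> conn src tgt H u w"
  unfolding conn_EE by (rule rtrancl_trans)

lemma conn_edge: "j \<in> H \<Longrightarrow> conn src tgt H (src j) (tgt j)"
  unfolding conn_EE EE_def by blast

lemma conn_mono: "H \<subseteq> H' \<Longrightarrow> conn src tgt H u v \<Longrightarrow> conn src tgt H' u v"
  unfolding conn_EE
proof -
  assume "H \<subseteq> H'" "(u, v) \<in> (EE src tgt H)\<^sup>*"
  moreover have "EE src tgt H \<subseteq> EE src tgt H'" using \<open>H \<subseteq> H'\<close> unfolding EE_def by blast
  ultimately show "(u, v) \<in> (EE src tgt H')\<^sup>*" using rtrancl_mono by blast
qed

lemma comp_eq: "conn src tgt H u v \<Longrightarrow> comp nv src tgt H u = comp nv src tgt H v"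
  unfolding comp_def using conn_trans conn_sym by blast

lemma cmin_eq: "conn src tgt H u v \<Longrightarrow> cmin nv src tgt H u = cmin nv src tgt H v"
  unfolding cmin_def using comp_eq by metis

lemma crank_eq: "conn src tgt H u v \<Longrightarrow> crank nv src tgt H u = crank nv src tgt H v"
  unfolding crank_def using cmin_eq by metis

lemma comp_mem: "v \<le> nv \<Longrightarrow> v \<in> comp nv src tgt H v"
  unfolding comp_def using conn_refl by auto

lemma cmin_in: "v \<le> nv \<Longrightarrow> cmin nv src tgt H v \<in> comp nv src tgt H v"
  unfolding cmin_def using comp_mem[of v nv src tgt H]
  by (intro Min_in) (auto simp: comp_def)

lemma cmin_fix: "v \<le> nv \<Longrightarrow> cmin nv src tgt H (cmin nv src tgt H v) = cmin nv src tgt H v"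
proof -
  assume v: "v \<le> nv"
  have "conn src tgt H (cmin nv src tgt H v) v" using cmin_in[OF v] by (simp add: comp_def)
  then have "cmin nv src tgt H (cmin nv src tgt H v) = cmin nv src tgt H v" by (rule cmin_eq)
  then show ?thesis .
qed

lemma crank_less:
  assumes u: "u \<le> nv" and lt: "cmin nv src tgt H u < cmin nv src tgt H v"
  shows "crank nv src tgt H u < crank nv src tgt H v"
proof -
  let ?a = "cmin nv src tgt H u"
  have au: "?a \<le> nv" using cmin_in[OF u] by (simp add: comp_def)
  have "{w \<in> {0..nv}. cmin nv src tgt H w = w \<and> w < ?a}
      \<subset> {w \<in> {0..nv}. cmin nv src tgt H w = w \<and> w < cmin nv src tgt H v}"
    using lt au cmin_fix[OF u] by auto
  then show ?thesis unfolding crank_def by (rule psubset_card_mono[rotated]) simp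
qed

lemma crank_neq:
  assumes u: "u \<le> nv" and v: "v \<le> nv" and nc: "\<not> conn src tgt H u v"
  shows "crank nv src tgt H u \<noteq> crank nv src tgt H v"
proof -
  have cu: "conn src tgt H (cmin nv src tgt H u) u" using cmin_in[OF u] by (simp add: comp_def)
  have cv: "conn src tgt H (cmin nv src tgt H v) v" using cmin_in[OF v] by (simp add: comp_def)
  have ne: "cmin nv src tgt H u \<noteq> cmin nv src tgt H v"
  proof
    assume "cmin nv src tgt H u = cmin nv src tgt H v"
    then have "conn src tgt H u v" using cu cv conn_sym conn_trans by metis
    with nc show False by simp
  qed
  show ?thesis
  proof (cases "cmin nv src tgt H u < cmin nv src tgt H v")
    case True
    then show ?thesis using crank_less[OF u True] by simp
  next
    case False
    then have "cmin nv src tgt H v < cmin nv src tgt H u" using ne by simp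
    then show ?thesis using crank_less[OF v] by fastforce
  qed
qed

section \<open>A general criterion for multipaths\<close>

lemma multipath_gen:
  assumes inj: "inj_on c {0..nv}" and img: "c ` {0..nv} = {0..nv}"
    and edges: "\<And>j. j \<in> H \<Longrightarrow> src j \<le> nv \<and> tgt j \<le> nv \<and> c (tgt j) = Suc (c (src j))"
    and injsrc: "inj_on src H"
  shows "is_multipath nv src tgt H"
  unfolding is_multipath_def
proof
  fix v assume vV: "v \<in> {0..nv}"
  define d where "d = the_inv_into {0..nv} c"
  have dc: "d (c x) = x" if "x \<le> nv" for x
    unfolding d_def using the_inv_into_f_f[OF inj, of x] that by simp
  have cd: "c (d y) = y" if "y \<le> nv" for y
    unfolding d_def using f_the_inv_into_f[OF inj, of y] img that by simp
  have dV: "d y \<le> nv" if "y \<le> nv" for y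
    unfolding d_def using the_inv_into_into[OF inj, of y "{0..nv}"] img that by simp
  have cV: "c x \<le> nv" if "x \<le> nv" for x
  proof -
    have "c x \<in> c ` {0..nv}" using that by simp
    then show ?thesis using img by simp
  qed
  have dinj: "inj_on d {0..nv}"
  proof (rule inj_onI)
    fix x y assume xy: "x \<in> {0..nv}" "y \<in> {0..nv}" "d x = d y"
    have "x = c (d x)" using cd[of x] xy by simp
    also have "\<dots> = c (d y)" using xy by simp
    also have "\<dots> = y" using cd[of y] xy by simp
    finally show "x = y" .
  qed
  define Q where "Q = {q. \<exists>j\<in>H. c (src j) = q}"
  have Qlt: "\<And>q. q \<in> Q \<Longrightarrow> q < nv"
  proof -
    fix q assume "q \<in> Q"
    then obtain j where j: "j \<in> H" "c (src j) = q" unfolding Q_def by auto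
    then show "q < nv" using edges[OF j(1)] cV[of "tgt j"] by auto
  qed
  define p where "p = c v"
  have pV: "p \<le> nv" using vV cV p_def by auto
  define a where "a = (LEAST a. a \<le> p \<and> {a..<p} \<subseteq> Q)"
  have a1: "a \<le> p \<and> {a..<p} \<subseteq> Q"
    unfolding a_def by (rule LeastI[of _ p]) simp
  have a2: "a = 0 \<or> a - 1 \<notin> Q"
  proof (rule ccontr)
    assume "\<not> (a = 0 \<or> a - 1 \<notin> Q)"
    then have h: "a > 0" "a - 1 \<in> Q" by auto
    have "{a - 1..<p} \<subseteq> Q"
    proof
      fix t assume "t \<in> {a - 1..<p}"
      then have "t = a - 1 \<or> t \<in> {a..<p}" by auto
      then show "t \<in> Q" using h a1 by auto
    qed
    then have "a - 1 \<le> p \<and> {a - 1..<p} \<subseteq> Q" using a1 by auto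
    then have "a \<le> a - 1" unfolding a_def by (rule Least_le)
    with h show False by simp
  qed
  define b where "b = (LEAST b. p \<le> b \<and> b \<notin> Q)"
  have b1: "p \<le> b \<and> b \<notin> Q"
    unfolding b_def by (rule LeastI[of _ nv]) (use pV Qlt in auto)
  have b2: "b \<le> nv"
    unfolding b_def by (rule Least_le) (use pV Qlt in auto)
  have b3: "{p..<b} \<subseteq> Q"
  proof
    fix q assume q: "q \<in> {p..<b}"
    show "q \<in> Q"
    proof (rule ccontr)
      assume "q \<notin> Q"
      then have "b \<le> q" unfolding b_def using q by (intro Least_le) auto
      with q show False by simp
    qed
  qed
  have abQ: "{a..<b} \<subseteq> Q"
  proof
    fix x assume x: "x \<in> {a..<b}"
    show "x \<in> Q"
    proof (cases "x < p")
      case True then have "x \<in> {a..<p}" using x by auto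
      then show ?thesis using a1 by blast
    next
      case False then have "x \<in> {p..<b}" using x by auto
      then show ?thesis using b3 by blast
    qed
  qed
  have ab: "a \<le> b" using a1 b1 by simp
  have step: "conn src tgt H (d q) (d (Suc q))" if q: "q \<in> {a..<b}" for q
  proof -
    have "q \<in> Q" using q abQ by auto
    then obtain j where j: "j \<in> H" "c (src j) = q" unfolding Q_def by auto
    have "d (c (src j)) = src j" using dc[of "src j"] edges[OF j(1)] by simp
    then have "src j = d q" using j(2) by simp
    moreover have "d (c (tgt j)) = tgt j" using dc[of "tgt j"] edges[OF j(1)] by simp
    then have "tgt j = d (Suc q)" using j(2) edges[OF j(1)] by simp
    ultimately show ?thesis using conn_edge[OF j(1), of src tgt] by simp
  qed
  have chain: "conn src tgt H (d a) (d (a + k))" if "a + k \<le> b" for k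
    using that
  proof (induction k)
    case 0
    then show ?case by (simp add: conn_refl)
  next
    case (Suc k)
    then have "conn src tgt H (d a) (d (a + k))" by simp
    moreover have "conn src tgt H (d (a + k)) (d (Suc (a + k)))" using Suc.prems by (intro step) auto
    ultimately show ?case using conn_trans by fastforce
  qed
  have inS: "d q \<in> comp nv src tgt H v" if q: "q \<in> {a..b}" for q
  proof -
    have "conn src tgt H (d a) (d q)" using chain[of "q - a"] q by auto
    moreover have "conn src tgt H (d a) (d p)" using chain[of "p - a"] a1 b1 by auto
    moreover have "d p = v" using dc vV p_def by auto
    ultimately have "conn src tgt H (d q) v" using conn_sym conn_trans by metis
    moreover have "d q \<le> nv" using dV q b2 by auto
    ultimately show ?thesis unfolding comp_def by auto
  qed
  have closed: "u \<in> d ` {a..b}" if "conn src tgt H v u" for u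
  proof -
    have "(v, u) \<in> (EE src tgt H)\<^sup>*" using that by (simp add: conn_EE)
    then show ?thesis
    proof (induction rule: rtrancl_induct)
      case base
      have "v = d p" using dc vV p_def by auto
      then show ?case using a1 b1 by auto
    next
      case (step y z)
      from step.IH obtain q where q: "q \<in> {a..b}" "y = d q" by auto
      have cy: "c y = q" using q cd b2 by auto
      from step.hyps(2) obtain j where j: "j \<in> H" "(y, z) = (src j, tgt j) \<or> (y, z) = (tgt j, src j)"
        unfolding EE_def by blast
      note ej = edges[OF j(1)]
      from j(2) show ?case
      proof
        assume yz: "(y, z) = (src j, tgt j)"
        then have "q \<in> Q" using cy j(1) unfolding Q_def by auto
        then have "q \<noteq> b" using b1 by auto
        then have "Suc q \<in> {a..b}" using q by auto
        moreover have "z = d (Suc q)"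
        proof -
          have zt: "z = tgt j" "y = src j" using yz by auto
          have "c z = Suc q" using zt ej cy by simp
          moreover have "d (c z) = z" using dc[of z] ej zt by simp
          ultimately show ?thesis by simp
        qed
        ultimately show ?thesis by blast
      next
        assume yz: "(y, z) = (tgt j, src j)"
        have cz: "Suc (c z) = q" using yz ej cy by auto
        have "c z \<in> Q" using yz j(1) unfolding Q_def by auto
        then have "a \<le> c z"
        proof (cases "a = 0")
          case False
          then have "a - 1 \<notin> Q" using a2 by simp
          then have "c z \<noteq> a - 1" using \<open>c z \<in> Q\<close> by auto
          moreover have "a \<le> Suc (c z)" using cz q by simp
          ultimately show ?thesis by linarith
        qed simp
        then have "c z \<in> {a..b}" using cz q by auto
        moreover have "z = d (c z)" using yz ej dc by auto
        ultimately show ?thesis by blast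
      qed
    qed
  qed
  have compv: "comp nv src tgt H v = d ` {a..b}"
  proof
    show "comp nv src tgt H v \<subseteq> d ` {a..b}"
      using closed conn_sym unfolding comp_def by blast
    show "d ` {a..b} \<subseteq> comp nv src tgt H v" using inS by blast
  qed
  define vs where "vs = map d [a..<Suc b]"
  have len: "length vs = Suc b - a" using ab by (simp add: vs_def)
  have nth: "vs ! i = d (a + i)" if "i < Suc b - a" for i using that ab unfolding vs_def by (subst nth_map) (auto simp del: upt_Suc)
  have dist: "distinct vs"
    unfolding vs_def distinct_map
  proof
    show "distinct [a..<Suc b]" by (rule distinct_upt)
    show "inj_on d (set [a..<Suc b])" using b2
      by (intro inj_on_subset[OF dinj]) (auto simp del: upt_Suc)
  qed
  have setvs: "set vs = comp nv src tgt H v"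
    unfolding compv vs_def by (auto simp del: upt_Suc)
  have cons: "\<forall>i. Suc i < length vs \<longrightarrow> (\<exists>j\<in>H. src j = vs ! i \<and> tgt j = vs ! Suc i)"
  proof (intro allI impI)
    fix i assume i: "Suc i < length vs"
    then have "a + i \<in> {a..<b}" using len by auto
    then have "a + i \<in> Q" using abQ by auto
    then obtain j where j: "j \<in> H" "c (src j) = a + i" unfolding Q_def by auto
    have "d (c (src j)) = src j" using dc[of "src j"] edges[OF j(1)] by simp
    then have "src j = d (a + i)" using j(2) by simp
    moreover have "d (c (tgt j)) = tgt j" using dc[of "tgt j"] edges[OF j(1)] by simp
    then have "tgt j = d (a + Suc i)" using j(2) edges[OF j(1)] by simp
    ultimately show "\<exists>j\<in>H. src j = vs ! i \<and> tgt j = vs ! Suc i"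
      using j(1) nth[of i] nth[of "Suc i"] i len by auto
  qed
  have all: "\<forall>j\<in>H. src j \<in> comp nv src tgt H v \<longrightarrow>
            (\<exists>i. Suc i < length vs \<and> src j = vs ! i \<and> tgt j = vs ! Suc i)"
  proof (intro ballI impI)
    fix j assume j: "j \<in> H" "src j \<in> comp nv src tgt H v"
    then obtain q where q: "q \<in> {a..b}" "src j = d q" using compv by auto
    have cq: "c (src j) = q" using q cd b2 by auto
    then have "q \<in> Q" using j(1) unfolding Q_def by auto
    then have qb: "q < b" using b1 q by (cases "q = b") auto
    define i where "i = q - a"
    have i: "Suc i < length vs" using qb q len i_def by auto
    have "vs ! i = src j" using nth[of i] i len q i_def by auto
    moreover have "vs ! Suc i = tgt j"
    proof -
      have "d (c (tgt j)) = tgt j" using dc[of "tgt j"] edges[OF j(1)] by simp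
      then have "d (Suc q) = tgt j" using edges[OF j(1)] cq by simp
      then show ?thesis using nth[of "Suc i"] i len q i_def by auto
    qed
    ultimately show "\<exists>i. Suc i < length vs \<and> src j = vs ! i \<and> tgt j = vs ! Suc i"
      using i by metis
  qed
  have uniq: "\<forall>j1\<in>H. \<forall>j2\<in>H. src j1 = src j2 \<and> tgt j1 = tgt j2 \<longrightarrow> j1 = j2"
    using injsrc by (auto dest: inj_onD)
  show "\<exists>vs. distinct vs \<and> set vs = comp nv src tgt H v \<and>
        (\<forall>i. Suc i < length vs \<longrightarrow> (\<exists>j\<in>H. src j = vs ! i \<and> tgt j = vs ! Suc i)) \<and>
        (\<forall>j\<in>H. src j \<in> comp nv src tgt H v \<longrightarrow>
            (\<exists>i. Suc i < length vs \<and> src j = vs ! i \<and> tgt j = vs ! Suc i)) \<and>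
        (\<forall>j1\<in>H. \<forall>j2\<in>H. src j1 = src j2 \<and> tgt j1 = tgt j2 \<longrightarrow> j1 = j2)"
    using dist setvs cons all uniq by blast
qed




lemma I_multipath: "H \<subseteq> {0..<n} \<Longrightarrow> is_multipath n I_src I_tgt H"
  by (rule multipath_gen[where c = id]) (auto simp: I_src_def I_tgt_def inj_on_def)

lemma subgraphs_I: "subgraphs n (is_multipath n I_src I_tgt) i = subgraphs n (\<lambda>_. True) i"
  unfolding subgraphs_def using I_multipath by blast

lemma I_sep:
  assumes "e \<notin> H" "H \<subseteq> {0..<n}"
  shows "\<not> conn I_src I_tgt H e (Suc e)"
proof
  assume "conn I_src I_tgt H e (Suc e)"
  then have "(e, Suc e) \<in> (EE I_src I_tgt H)\<^sup>*" by (simp add: conn_EE)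
  moreover have "(e, u) \<in> (EE I_src I_tgt H)\<^sup>* \<Longrightarrow> u \<le> e" for u
  proof (induction rule: rtrancl_induct)
    case base then show ?case by simp
  next
    case (step y z)
    then obtain j where j: "j \<in> H" "(y, z) = (j, Suc j) \<or> (y, z) = (Suc j, j)"
      unfolding EE_def I_src_def I_tgt_def by blast
    have "j \<noteq> e" using j(1) assms(1) by auto
    then show ?case using j(2) step.IH by auto
  qed
  ultimately show False by fastforce
qed

lemma P_tgt_eq: "j \<le> n \<Longrightarrow> P_tgt n j = (if j < n then Suc j else 0)"
  by (auto simp: P_tgt_def)

lemma P_multipath:
  assumes H: "H \<subseteq> {0..<Suc n}" and k: "k \<le> n" "k \<notin> H"
  shows "is_multipath n (P_src n) (P_tgt n) H"
proof (rule multipath_gen[where c = "\<lambda>v. if k < v then v - Suc k else v + n - k"])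
  show "inj_on (\<lambda>v. if k < v then v - Suc k else v + n - k) {0..n}"
    using k by (auto simp: inj_on_def split: if_splits)
  have "(\<lambda>v. if k < v then v - Suc k else v + n - k) ` {0..n} \<subseteq> {0..n}"
    using k by auto
  moreover have "{0..n} \<subseteq> (\<lambda>v. if k < v then v - Suc k else v + n - k) ` {0..n}"
  proof
    fix w assume w: "w \<in> {0..n}"
    show "w \<in> (\<lambda>v. if k < v then v - Suc k else v + n - k) ` {0..n}"
    proof (cases "w < n - k")
      case True
      then show ?thesis using w k by (intro image_eqI[where x = "w + Suc k"]) auto
    next
      case False
      then show ?thesis using w k by (intro image_eqI[where x = "w + k - n"]) auto
    qed
  qed
  ultimately show "(\<lambda>v. if k < v then v - Suc k else v + n - k) ` {0..n} = {0..n}" by blast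
  fix j assume j: "j \<in> H"
  then have jn: "j \<le> n" "j \<noteq> k" using H k by auto
  show "P_src n j \<le> n \<and> P_tgt n j \<le> n \<and>
    (if k < P_tgt n j then P_tgt n j - Suc k else P_tgt n j + n - k) =
    Suc (if k < P_src n j then P_src n j - Suc k else P_src n j + n - k)"
    using jn k by (auto simp: P_src_def P_tgt_eq)
next
  show "inj_on (P_src n) H" by (simp add: P_src_def inj_on_def)
qed

lemma P_conn0:
  assumes e: "e \<le> n" and H: "{0..<Suc n} - {e} \<subseteq> H" and v: "v \<le> n"
  shows "conn (P_src n) (P_tgt n) H v 0"
proof -
  have edge: "conn (P_src n) (P_tgt n) H j (Suc j)" if "j < n" "j \<noteq> e" for j
  proof -
    have "j \<in> H" using that H by auto
    from conn_edge[OF this, of "P_src n" "P_tgt n"] show ?thesis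
      using that by (simp add: P_src_def P_tgt_eq)
  qed
  have low: "conn (P_src n) (P_tgt n) H w 0" if "w \<le> e" for w
    using that
  proof (induction w)
    case 0 show ?case by (rule conn_refl)
  next
    case (Suc w)
    then have c1: "conn (P_src n) (P_tgt n) H w (Suc w)" using e by (intro edge) auto
    have c2: "conn (P_src n) (P_tgt n) H w 0" using Suc by simp
    show ?case by (rule conn_trans[OF conn_sym[OF c1] c2])
  qed
  show ?thesis
  proof (cases "v \<le> e")
    case True then show ?thesis by (rule low)
  next
    case False
    have high: "e < w \<longrightarrow> conn (P_src n) (P_tgt n) H w n" if "w \<le> n" for w
      using that
    proof (induction w rule: inc_induct)
      case base then show ?case by (simp add: conn_refl)
    next
      case (step w)
      show ?case
      proof
        assume "e < w"
        then have "conn (P_src n) (P_tgt n) H w (Suc w)" using step by (intro edge) auto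
        moreover have "conn (P_src n) (P_tgt n) H (Suc w) n" using step \<open>e < w\<close> by auto
        ultimately show "conn (P_src n) (P_tgt n) H w n" by (rule conn_trans)
      qed
    qed
    have "e \<noteq> n" using False v by auto
    then have "n \<in> H" using H by auto
    from conn_edge[OF this, of "P_src n" "P_tgt n"]
    have "conn (P_src n) (P_tgt n) H n 0" by (simp add: P_src_def P_tgt_def)
    moreover have "conn (P_src n) (P_tgt n) H v n" using high[OF v] False by simp
    ultimately show ?thesis using conn_trans by blast
  qed
qed

lemma P_comp_full:
  assumes e: "e \<le> n" and H: "{0..<Suc n} - {e} \<subseteq> H" and v: "v \<le> n"
  shows "comp n (P_src n) (P_tgt n) H v = {0..n}"
proof -
  have "conn (P_src n) (P_tgt n) H u v" if "u \<le> n" for u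
    by (rule conn_trans[OF P_conn0[OF e H that] conn_sym[OF P_conn0[OF e H v]]])
  then show ?thesis unfolding comp_def by auto
qed

lemma P_full_not_mp: "\<not> is_multipath n (P_src n) (P_tgt n) {0..<Suc n}"
proof
  assume mp: "is_multipath n (P_src n) (P_tgt n) {0..<Suc n}"
  have z: "(0::nat) \<in> {0..n}" by simp
  from mp[unfolded is_multipath_def, THEN bspec, OF z]
  obtain vs where vs0: "distinct vs \<and> set vs = comp n (P_src n) (P_tgt n) {0..<Suc n} 0 \<and>
        (\<forall>i. Suc i < length vs \<longrightarrow> (\<exists>j\<in>{0..<Suc n}. P_src n j = vs ! i \<and> P_tgt n j = vs ! Suc i)) \<and>
        (\<forall>j\<in>{0..<Suc n}. P_src n j \<in> comp n (P_src n) (P_tgt n) {0..<Suc n} 0 \<longrightarrow>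
            (\<exists>i. Suc i < length vs \<and> P_src n j = vs ! i \<and> P_tgt n j = vs ! Suc i)) \<and>
        (\<forall>j1\<in>{0..<Suc n}. \<forall>j2\<in>{0..<Suc n}. P_src n j1 = P_src n j2 \<and> P_tgt n j1 = P_tgt n j2 \<longrightarrow> j1 = j2)"
    by (elim exE) (rule that)
  have vs: "distinct vs" "set vs = comp n (P_src n) (P_tgt n) {0..<Suc n} 0" using vs0 by simp_all
  have all: "\<forall>j\<in>{0..<Suc n}. P_src n j \<in> comp n (P_src n) (P_tgt n) {0..<Suc n} 0 \<longrightarrow>
            (\<exists>i. Suc i < length vs \<and> P_src n j = vs ! i \<and> P_tgt n j = vs ! Suc i)"
    using vs0 by (elim conjE)
  have cp: "comp n (P_src n) (P_tgt n) {0..<Suc n} 0 = {0..n}"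
    by (rule P_comp_full[of 0]) auto
  have len: "length vs = Suc n" using distinct_card[OF vs(1)] vs(2) cp by simp
  have "{0..n} \<subseteq> (\<lambda>i. vs ! i) ` {..<n}"
  proof
    fix j assume j: "j \<in> {0..n}"
    then have "\<exists>i. Suc i < length vs \<and> P_src n j = vs ! i \<and> P_tgt n j = vs ! Suc i"
      using all cp by (auto simp: P_src_def)
    then show "j \<in> (\<lambda>i. vs ! i) ` {..<n}" using len by (auto simp: P_src_def)
  qed
  then have "card {0..n} \<le> card ((\<lambda>i. vs ! i) ` {..<n})" by (intro card_mono) auto
  also have "\<dots> \<le> n" using card_image_le[of "{..<n}" "\<lambda>i. vs ! i"] by simp
  finally show False by simp
qed

lemma subgraphs_P_ne: "i \<noteq> Suc n \<Longrightarrow>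
  subgraphs (Suc n) (is_multipath n (P_src n) (P_tgt n)) i = subgraphs (Suc n) (\<lambda>_. True) i"
proof -
  assume i: "i \<noteq> Suc n"
  have "is_multipath n (P_src n) (P_tgt n) H" if HH: "H \<subseteq> {0..<Suc n}" "card H = i" for H
  proof -
    have "H \<noteq> {0..<Suc n}" using HH i by auto
    then obtain k where "k \<in> {0..<Suc n}" "k \<notin> H" using HH by blast
    then show ?thesis using P_multipath[OF HH(1), of k] by simp
  qed
  then show ?thesis unfolding subgraphs_def by (intro Collect_cong) blast
qed

lemma card_sub_full: "H \<subseteq> {0..<Suc n} \<Longrightarrow> card H = Suc n \<Longrightarrow> H = {0..<Suc n}"
  using card_subset_eq[of "{0..<Suc n}" H] by simp

lemma subgraphs_P_mp_top: "subgraphs (Suc n) (is_multipath n (P_src n) (P_tgt n)) (Suc n) = {}"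
proof -
  have "\<not> (H \<subseteq> {0..<Suc n} \<and> card H = Suc n \<and> is_multipath n (P_src n) (P_tgt n) H)" for H
  proof
    assume h: "H \<subseteq> {0..<Suc n} \<and> card H = Suc n \<and> is_multipath n (P_src n) (P_tgt n) H"
    then have "H = {0..<Suc n}" using card_sub_full by blast
    then show False using h P_full_not_mp by simp
  qed
  then show ?thesis unfolding subgraphs_def by (simp only: Collect_empty_eq) blast
qed

lemma subgraphs_top: "subgraphs (Suc n) (\<lambda>_. True) (Suc n) = {{0..<Suc n}}"
proof -
  have "H \<subseteq> {0..<Suc n} \<and> card H = Suc n \<and> True \<longleftrightarrow> H \<in> {{0..<Suc n}}" for H
    using card_sub_full[of H n] by auto
  then show ?thesis unfolding subgraphs_def by blast
qed

lemma subgraphs_above: "subgraphs (Suc n) P (Suc (Suc n)) = {}"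
proof -
  have "card H \<le> Suc n" if "H \<subseteq> {0..<Suc n}" for H :: "nat set"
    using card_mono[OF _ that] by simp
  then have "\<not> (H \<subseteq> {0..<Suc n} \<and> card H = Suc (Suc n) \<and> P H)" for H by (metis Suc_n_not_le_n)
  then show ?thesis unfolding subgraphs_def by (simp only: Collect_empty_eq) blast
qed

lemma kH_full: "kH n (P_src n) (P_tgt n) {0..<Suc n} = 0"
proof -
  have "cmin n (P_src n) (P_tgt n) {0..<Suc n} w = 0" if "w \<le> n" for w
  proof -
    have "Min {0..n} = (0::nat)" by (rule Min_eqI) auto
    then show ?thesis unfolding cmin_def using P_comp_full[of 0 n "{0..<Suc n}" w] that by simp
  qed
  then have "{w \<in> {0..n}. cmin n (P_src n) (P_tgt n) {0..<Suc n} w = w} = {0}" by auto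
  then show ?thesis unfolding kH_def by simp
qed

lemma P_same_comp:
  assumes e: "e \<in> {0..<Suc n}"
  shows "crank n (P_src n) (P_tgt n) ({0..<Suc n} - {e}) (P_src n e)
       = crank n (P_src n) (P_tgt n) ({0..<Suc n} - {e}) (P_tgt n e)"
proof (rule crank_eq)
  have H: "{0..<Suc n} - {e} \<subseteq> {0..<Suc n} - {e}" by simp
  have en: "e \<le> n" using e by simp
  have s: "P_src n e \<le> n" and t: "P_tgt n e \<le> n" using en by (auto simp: P_src_def P_tgt_eq)
  have c1: "conn (P_src n) (P_tgt n) ({0..<Suc n} - {e}) (P_src n e) 0" by (rule P_conn0[OF en H s])
  have c2: "conn (P_src n) (P_tgt n) ({0..<Suc n} - {e}) 0 (P_tgt n e)" by (rule conn_sym[OF P_conn0[OF en H t]])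
  show "conn (P_src n) (P_tgt n) ({0..<Suc n} - {e}) (P_src n e) (P_tgt n e)"
    by (rule conn_trans[OF c1 c2])
qed




lemma cx_iso_refl: "cx_iso C C"
  unfolding cx_iso_def by (rule exI[of _ "\<lambda>i x. x"]) (simp add: bij_betw_def)

lemma cover_map_neq:
  "crank nv src tgt H (src e) \<noteq> crank nv src tgt H (tgt e) \<Longrightarrow>
   cover_map lm rm True nv src tgt H e f = cover_map lm rm False nv src tgt H e f"
  by (simp add: cover_map_def Let_def)

lemma cover_map_eq:
  "crank nv src tgt H (src e) = crank nv src tgt H (tgt e) \<Longrightarrow>
   cover_map lm rm True nv src tgt H e f = 0"
  by (simp add: cover_map_def Let_def)

lemma part1: "multipath_cx alg lm rm n n I_src I_tgt = chrom_hat_cx alg lm rm n n I_src I_tgt"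
  unfolding multipath_cx_def chrom_hat_cx_def graph_cx_def subgraphs_I ..

lemma part2: "cx_iso (chrom_hat_cx alg lm rm n n I_src I_tgt) (chrom_cx alg lm rm n n I_src I_tgt)"
proof -
  have d: "cx_d (chrom_hat_cx alg lm rm n n I_src I_tgt) i x = cx_d (chrom_cx alg lm rm n n I_src I_tgt) i x"
    for i x
  proof -
    have "(\<Sum>e\<in>H'. fsmult ((- 1) ^ card {j \<in> H' - {e}. j < e})
            (cover_map lm rm True n I_src I_tgt (H' - {e}) e (rep (x (H' - {e})))))
        = (\<Sum>e\<in>H'. fsmult ((- 1) ^ card {j \<in> H' - {e}. j < e})
            (cover_map lm rm False n I_src I_tgt (H' - {e}) e (rep (x (H' - {e})))))"
      if H': "H' \<in> subgraphs n (\<lambda>H. True) (Suc i)" for H'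
    proof (rule sum.cong[OF refl])
      fix e assume e: "e \<in> H'"
      have sub: "H' \<subseteq> {0..<n}" using H' by (simp add: subgraphs_def)
      then have en: "e < n" using e by auto
      have "\<not> conn I_src I_tgt (H' - {e}) e (Suc e)"
        by (rule I_sep) (use sub in auto)
      then have "crank n I_src I_tgt (H' - {e}) e \<noteq> crank n I_src I_tgt (H' - {e}) (Suc e)"
        by (rule crank_neq[rotated 2]) (use en in auto)
      then have "crank n I_src I_tgt (H' - {e}) (I_src e) \<noteq> crank n I_src I_tgt (H' - {e}) (I_tgt e)"
        by (simp add: I_src_def I_tgt_def)
      then show "fsmult ((- 1) ^ card {j \<in> H' - {e}. j < e})
            (cover_map lm rm True n I_src I_tgt (H' - {e}) e (rep (x (H' - {e}))))
          = fsmult ((- 1) ^ card {j \<in> H' - {e}. j < e})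
            (cover_map lm rm False n I_src I_tgt (H' - {e}) e (rep (x (H' - {e}))))"
        by (simp add: cover_map_neq)
    qed
    note eqs = this
    show ?thesis
      unfolding chrom_hat_cx_def chrom_cx_def graph_cx_def cochain_cx.select_convs
      apply (rule ext)
      apply (rule if_cong[OF refl])
       apply (rule arg_cong[where f="tq alg lm"])
       apply (erule eqs)
      apply (rule refl)
      done
  qed
  show ?thesis
    unfolding cx_iso_def
    apply (rule exI[of _ "\<lambda>i x. x"])
    apply (intro allI conjI)
    apply (simp_all add: d bij_betw_def)
    apply (simp_all add: chrom_hat_cx_def chrom_cx_def graph_cx_def)
    done
qed


context
  fixes alg :: "'r::comm_ring_1 \<Rightarrow> 'a::ring_1"
    and lm :: "'a \<Rightarrow> 'm::ab_group_add \<Rightarrow> 'm" and rm :: "'m \<Rightarrow> 'a \<Rightarrow> 'm"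
    and n :: nat
  assumes ra: "r_algebra alg" and bm: "bimodule alg lm rm"
begin

abbreviation "MP \<equiv> multipath_cx alg lm rm n (Suc n) (P_src n) (P_tgt n)"
abbreviation "CH \<equiv> chrom_hat_cx alg lm rm n (Suc n) (P_src n) (P_tgt n)"
abbreviation "SM \<equiv> shifted_M alg lm (Suc n)"
abbreviation "full \<equiv> {0..<Suc n}"

definition GG :: "'m \<Rightarrow> nat set \<Rightarrow> ('m, 'a, 'r) free set" where
  "GG m = (\<lambda>H. if H = full then tq alg lm (gen m []) else {})"

definition FF :: "nat \<Rightarrow> (nat set \<Rightarrow> ('m, 'a, 'r) free set) \<times> 'm \<Rightarrow> nat set \<Rightarrow> ('m, 'a, 'r) free set" where
  "FF i p = (if i = Suc n then GG (snd p) else fst p)"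

lemma car_ne: assumes "i \<noteq> Suc n" shows "cx_carrier MP i = cx_carrier CH i"
  unfolding multipath_cx_def chrom_hat_cx_def graph_cx_def cochain_cx.select_convs
    subgraphs_P_ne[OF assms] ..

lemma add_ne: assumes "i \<noteq> Suc n" shows "cx_add MP i = cx_add CH i"
  unfolding multipath_cx_def chrom_hat_cx_def graph_cx_def cochain_cx.select_convs
    subgraphs_P_ne[OF assms] ..

lemma smult_ne: assumes "i \<noteq> Suc n" shows "cx_smult MP i = cx_smult CH i"
  unfolding multipath_cx_def chrom_hat_cx_def graph_cx_def cochain_cx.select_convs
    subgraphs_P_ne[OF assms] ..

lemma d_ne: assumes "i \<noteq> n" shows "cx_d MP i = cx_d CH i"
proof -
  have "Suc i \<noteq> Suc n" using assms by simp
  show ?thesis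
    unfolding multipath_cx_def chrom_hat_cx_def graph_cx_def cochain_cx.select_convs
      subgraphs_P_ne[OF \<open>Suc i \<noteq> Suc n\<close>] ..
qed

lemma car_top_MP: "cx_carrier MP (Suc n) = {\<lambda>_. {}}"
  unfolding multipath_cx_def graph_cx_def cochain_cx.select_convs subgraphs_P_mp_top
  by (auto intro!: ext)

lemma car_top_CH: "cx_carrier CH (Suc n) =
   {x. x full \<in> tensor_carrier alg lm 0 \<and> (\<forall>H. H \<noteq> full \<longrightarrow> x H = {})}"
  unfolding chrom_hat_cx_def graph_cx_def cochain_cx.select_convs subgraphs_top
  using kH_full[of n] by auto

lemma d_top_MP: "cx_d MP (Suc n) x = (\<lambda>_. {})"
  unfolding multipath_cx_def graph_cx_def cochain_cx.select_convs subgraphs_above by simp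

lemma d_top_CH: "cx_d CH (Suc n) x = (\<lambda>_. {})"
  unfolding chrom_hat_cx_def graph_cx_def cochain_cx.select_convs subgraphs_above by simp

lemma d_n_MP: "cx_d MP n x = (\<lambda>_. {})"
  unfolding multipath_cx_def graph_cx_def cochain_cx.select_convs subgraphs_P_mp_top by simp

lemma d_n_CH: "cx_d CH n x = (\<lambda>H. if H = full then tq alg lm 0 else {})"
proof -
  have "(\<Sum>e\<in>full. fsmult ((- 1) ^ card {j \<in> full - {e}. j < e})
            (cover_map lm rm True n (P_src n) (P_tgt n) (full - {e}) e (rep (x (full - {e}))))) = 0"
  proof (rule sum.neutral, rule ballI)
    fix e assume e: "e \<in> full"
    show "fsmult ((- 1) ^ card {j \<in> full - {e}. j < e})
            (cover_map lm rm True n (P_src n) (P_tgt n) (full - {e}) e (rep (x (full - {e})))) = 0"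
      by (simp add: cover_map_eq[OF P_same_comp[OF e]])
  qed
  note eq = this
  show ?thesis
    unfolding chrom_hat_cx_def graph_cx_def cochain_cx.select_convs subgraphs_top
  proof (rule ext)
    fix H
    show "(if H \<in> {full} then tq alg lm (\<Sum>e\<in>H. fsmult ((- 1) ^ card {j \<in> H - {e}. j < e})
            (cover_map lm rm True n (P_src n) (P_tgt n) (H - {e}) e (rep (x (H - {e}))))) else {})
       = (if H = full then tq alg lm 0 else {})"
      by (cases "H = full") (simp_all only: eq singleton_iff if_True if_False)
  qed
qed

lemma GG_zero: "GG 0 = (\<lambda>H. if H = full then tq alg lm 0 else {})"
proof -
  have eq: "tq alg lm (gen 0 []) = tq alg lm 0" unfolding tq_eq_iff using gen0_N by simp
  show ?thesis unfolding GG_def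
  proof (rule ext)
    fix H
    show "(if H = full then tq alg lm (gen 0 []) else {}) = (if H = full then tq alg lm 0 else {})"
      by (simp add: eq)
  qed
qed

lemma gen_free_len: "gen m [] \<in> free_len 0"
  unfolding free_len_def gen_def by auto

lemma GG_car: "GG m \<in> cx_carrier CH (Suc n)"
proof -
  have "tq alg lm (gen m []) \<in> tensor_carrier alg lm 0"
    unfolding tensor_carrier_def by (rule imageI[OF gen_free_len])
  then show ?thesis unfolding car_top_CH GG_def by simp
qed

lemma GG_inj: "GG m = GG m' \<Longrightarrow> m = m'"
proof -
  assume "GG m = GG m'"
  then have "GG m full = GG m' full" by simp
  then have "tq alg lm (gen m []) = tq alg lm (gen m' [])" unfolding GG_def by simp
  then show "m = m'" by (rule gen_inj[OF ra bm])
qed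

lemma GG_surj: "y \<in> cx_carrier CH (Suc n) \<Longrightarrow> \<exists>m. y = GG m"
proof -
  assume "y \<in> cx_carrier CH (Suc n)"
  then have y: "y full \<in> tensor_carrier alg lm 0" "\<And>H. H \<noteq> full \<Longrightarrow> y H = {}"
    unfolding car_top_CH by auto
  from y(1) obtain g where g: "g \<in> free_len 0" "y full = tq alg lm g"
    unfolding tensor_carrier_def by auto
  from free_len0_surj[OF ra bm g(1)] obtain m where "tq alg lm g = tq alg lm (gen m [])" by blast
  then have "y = GG m" unfolding GG_def
  proof (intro ext)
    fix H
    assume eq: "tq alg lm g = tq alg lm (gen m [])"
    show "y H = (if H = full then tq alg lm (gen m []) else {})"
      using y(2)[of H] g(2) eq by (cases "H = full") simp_all
  qed
  then show ?thesis by blast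
qed

lemma GG_add: "cx_add CH (Suc n) (GG m) (GG m') = GG (m + m')"
proof -
  have "tq alg lm (rep (tq alg lm (gen m [])) + rep (tq alg lm (gen m' []))) = tq alg lm (gen (m + m') [])"
    using tq_rep_add gen_add[OF ra bm] by metis
  note eq = this
  show ?thesis
    unfolding chrom_hat_cx_def graph_cx_def cochain_cx.select_convs subgraphs_top GG_def
  proof (rule ext)
    fix H
    show "(if H \<in> {full} then tq alg lm (rep (if H = full then tq alg lm (gen m []) else {}) +
                 rep (if H = full then tq alg lm (gen m' []) else {})) else {}) =
          (if H = full then tq alg lm (gen (m + m') []) else {})"
      using eq by (cases "H = full") simp_all
  qed
qed

lemma GG_smult: "cx_smult CH (Suc n) r (GG m) = GG (lm (alg r) m)"
proof -
  have "tq alg lm (fsmult r (rep (tq alg lm (gen m [])))) = tq alg lm (gen (lm (alg r) m) [])"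
    using tq_rep_smult gen_smult[OF ra bm] by metis
  note eq = this
  show ?thesis
    unfolding chrom_hat_cx_def graph_cx_def cochain_cx.select_convs subgraphs_top GG_def
  proof (rule ext)
    fix H
    show "(if H \<in> {full} then tq alg lm (fsmult r (rep (if H = full then tq alg lm (gen m []) else {}))) else {}) =
          (if H = full then tq alg lm (gen (lm (alg r) m) []) else {})"
      using eq by (cases "H = full") simp_all
  qed
qed

lemma part3: "cx_iso (cx_dsum MP SM) CH"
  unfolding cx_iso_def
proof (rule exI[of _ FF], rule allI)
  fix i
  show "bij_betw (FF i) (cx_carrier (cx_dsum MP SM) i) (cx_carrier CH i) \<and>
        (\<forall>x\<in>cx_carrier (cx_dsum MP SM) i. \<forall>y\<in>cx_carrier (cx_dsum MP SM) i.
            FF i (cx_add (cx_dsum MP SM) i x y) = cx_add CH i (FF i x) (FF i y)) \<and>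
        (\<forall>r. \<forall>x\<in>cx_carrier (cx_dsum MP SM) i. FF i (cx_smult (cx_dsum MP SM) i r x) = cx_smult CH i r (FF i x)) \<and>
        (\<forall>x\<in>cx_carrier (cx_dsum MP SM) i. FF (Suc i) (cx_d (cx_dsum MP SM) i x) = cx_d CH i (FF i x))"
  proof (cases "i = Suc n")
    case True
    have car: "cx_carrier (cx_dsum MP SM) i = {\<lambda>_. {}} \<times> UNIV"
      using True car_top_MP by (simp add: cx_dsum_def shifted_M_def)
    have FFi: "FF i p = GG (snd p)" for p using True by (simp add: FF_def)
    have FFs: "FF (Suc i) p = fst p" for p using True by (simp add: FF_def)
    have bij: "bij_betw (FF i) (cx_carrier (cx_dsum MP SM) i) (cx_carrier CH i)"
      unfolding bij_betw_def
    proof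
      show "inj_on (FF i) (cx_carrier (cx_dsum MP SM) i)"
        unfolding car inj_on_def FFi using GG_inj by auto
      show "FF i ` cx_carrier (cx_dsum MP SM) i = cx_carrier CH i"
      proof
        show "FF i ` cx_carrier (cx_dsum MP SM) i \<subseteq> cx_carrier CH i"
          unfolding car FFi using GG_car True by auto
        show "cx_carrier CH i \<subseteq> FF i ` cx_carrier (cx_dsum MP SM) i"
        proof
          fix y assume "y \<in> cx_carrier CH i"
          then obtain m where "y = GG m" using GG_surj True by blast
          then have "y = FF i ((\<lambda>_. {}), m)" unfolding FFi by simp
          then show "y \<in> FF i ` cx_carrier (cx_dsum MP SM) i" unfolding car by blast
        qed
      qed
    qed
    have add: "\<forall>x\<in>cx_carrier (cx_dsum MP SM) i. \<forall>y\<in>cx_carrier (cx_dsum MP SM) i.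
            FF i (cx_add (cx_dsum MP SM) i x y) = cx_add CH i (FF i x) (FF i y)"
    proof (intro ballI)
      fix x y assume "x \<in> cx_carrier (cx_dsum MP SM) i" "y \<in> cx_carrier (cx_dsum MP SM) i"
      have "cx_add (cx_dsum MP SM) i x y = (cx_add MP i (fst x) (fst y), snd x + snd y)"
        by (simp add: cx_dsum_def shifted_M_def)
      then show "FF i (cx_add (cx_dsum MP SM) i x y) = cx_add CH i (FF i x) (FF i y)"
        unfolding FFi using GG_add True by simp
    qed
    have smult: "\<forall>r. \<forall>x\<in>cx_carrier (cx_dsum MP SM) i. FF i (cx_smult (cx_dsum MP SM) i r x) = cx_smult CH i r (FF i x)"
    proof (intro allI ballI)
      fix r x
      have "cx_smult (cx_dsum MP SM) i r x = (cx_smult MP i r (fst x), lm (alg r) (snd x))"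
        by (simp add: cx_dsum_def shifted_M_def)
      then show "FF i (cx_smult (cx_dsum MP SM) i r x) = cx_smult CH i r (FF i x)"
        unfolding FFi using GG_smult True by simp
    qed
    have d: "\<forall>x\<in>cx_carrier (cx_dsum MP SM) i. FF (Suc i) (cx_d (cx_dsum MP SM) i x) = cx_d CH i (FF i x)"
    proof (intro ballI)
      fix x
      have "cx_d (cx_dsum MP SM) i x = (cx_d MP i (fst x), 0)"
        by (simp add: cx_dsum_def shifted_M_def)
      then show "FF (Suc i) (cx_d (cx_dsum MP SM) i x) = cx_d CH i (FF i x)"
        unfolding FFs using True by (simp add: d_top_MP d_top_CH)
    qed
    show ?thesis using bij add smult d by blast
  next
    case False
    have car: "cx_carrier (cx_dsum MP SM) i = cx_carrier CH i \<times> {0}"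
      using False car_ne by (simp add: cx_dsum_def shifted_M_def)
    have FFi: "FF i p = fst p" for p using False by (simp add: FF_def)
    have bij: "bij_betw (FF i) (cx_carrier (cx_dsum MP SM) i) (cx_carrier CH i)"
      unfolding car FFi bij_betw_def inj_on_def by force
    have add: "\<forall>x\<in>cx_carrier (cx_dsum MP SM) i. \<forall>y\<in>cx_carrier (cx_dsum MP SM) i.
            FF i (cx_add (cx_dsum MP SM) i x y) = cx_add CH i (FF i x) (FF i y)"
      using False add_ne by (simp add: FFi cx_dsum_def)
    have smult: "\<forall>r. \<forall>x\<in>cx_carrier (cx_dsum MP SM) i. FF i (cx_smult (cx_dsum MP SM) i r x) = cx_smult CH i r (FF i x)"
      using False smult_ne by (simp add: FFi cx_dsum_def)
    have d: "\<forall>x\<in>cx_carrier (cx_dsum MP SM) i. FF (Suc i) (cx_d (cx_dsum MP SM) i x) = cx_d CH i (FF i x)"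
    proof (cases "i = n")
      case True
      then show ?thesis
        by (simp add: FF_def FFi cx_dsum_def shifted_M_def d_n_MP d_n_CH GG_zero)
    next
      case False
      then show ?thesis using \<open>i \<noteq> Suc n\<close> d_ne
        by (simp add: FF_def FFi cx_dsum_def)
    qed
    show ?thesis using bij add smult d by blast
  qed
qed

end

theorem theorem6p4:
  fixes alg :: "'r::comm_ring_1 \<Rightarrow> 'a::ring_1"
    and lm :: "'a \<Rightarrow> 'm::ab_group_add \<Rightarrow> 'm" and rm :: "'m \<Rightarrow> 'a \<Rightarrow> 'm"
    and n :: nat
  assumes "r_algebra alg" and "bimodule alg lm rm"
  shows "cx_iso (multipath_cx alg lm rm n n I_src I_tgt) (chrom_hat_cx alg lm rm n n I_src I_tgt)
       \<and> cx_iso (chrom_hat_cx alg lm rm n n I_src I_tgt) (chrom_cx alg lm rm n n I_src I_tgt)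
       \<and> cx_iso (cx_dsum (multipath_cx alg lm rm n (Suc n) (P_src n) (P_tgt n))
                         (shifted_M alg lm (Suc n)))
                (chrom_hat_cx alg lm rm n (Suc n) (P_src n) (P_tgt n))"
proof (intro conjI)
  show "cx_iso (multipath_cx alg lm rm n n I_src I_tgt) (chrom_hat_cx alg lm rm n n I_src I_tgt)"
    unfolding part1 by (rule cx_iso_refl)
  show "cx_iso (chrom_hat_cx alg lm rm n n I_src I_tgt) (chrom_cx alg lm rm n n I_src I_tgt)"
    by (rule part2)
  show "cx_iso (cx_dsum (multipath_cx alg lm rm n (Suc n) (P_src n) (P_tgt n))
                         (shifted_M alg lm (Suc n)))
                (chrom_hat_cx alg lm rm n (Suc n) (P_src n) (P_tgt n))"
    by (rule part3[OF assms])
qed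


end
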